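(* Let $k>500$, $\ln^3k/\sqrt k<\delta<1/100$, $d=300\lceil\ln k\rceil$, $\varepsilon=50\delta/\lceil\ln k\rceil$, and let $c^1,\dots,c^k\in G$ and $X$ be as in the context, and suppose they satisfy: (1) $\|c^i-c^j\|_2\ge\sqrt d/5$ for all $i\ne j$; and (2) for every path $\pi$ of length at most $\log_2k/4$, either $|F_{u(\pi)}|\le\sqrt k$, or every threshold cut that separates at least two data points of $X\cap u(\pi)$ damages at least $\varepsilon|F_{u(\pi)}|/2$ centers of $F_{u(\pi)}$. Then every threshold tree in which each leaf contains at most one of the centers $c^1,\dots,c^k$ has at least $2\delta k$ damaged centers, where a center $c^i$ is damaged by the tree if $c^i+\varepsilon\mathbf 1$ or $c^i-\varepsilon\mathbf 1$ lies in a different leaf from $c^i$.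
   Context: $G$ is the set of points of $[0,1]^d$ all of whose coordinates are nonnegative integer multiples of $\varepsilon$; $\mathbf{1}=(1,\dots,1)\in\mathbb{R}^d$. The data set (multiset) $X$ consists, for each $i$, of $k^2\lceil\ln^3k\rceil$ copies of $c^i$ together with $c^i+\varepsilon\mathbf{1}$ and $c^i-\varepsilon\mathbf{1}$. A threshold tree is a rooted binary tree of cells of $\mathbb{R}^d$ with root $\mathbb{R}^d$, each internal node $u$ split by a cut $(i,\xi)$ into $\{y\in u:y_i\le\xi\}$ and $\{y\in u:y_i>\xi\}$. A path $\pi$ is a finite sequence of triples $(i_j,\xi_j,\lambda_j)$ with $i_j\in\{1,\dots,d\}$, $\xi_j\in\mathbb{R}$, $\lambda_j\in\{\pm1\}$; its length is the number of triples; $u(\pi)$ is the set of $y$ with $y_{i_j}\le\xi_j$ when $\lambda_j=-1$ and $y_{i_j}>\xi_j$ when $\lambda_j=+1$, for all $j$. A center $c^i\in u(\pi)$ is damaged in $u(\pi)$ if $c^i\pm\varepsilon\mathbf 1\notin u(\pi)$ for some sign; $F_{u(\pi)}$ is the set of centers in $u(\pi)$ not damaged in $u(\pi)$. A cut $(i,\xi)$ separates two points if exactly one satisfies $y_i\le\xi$, and damages a center $c$ if it separates $c$ from $c+\varepsilon\mathbf1$ or from $c-\varepsilon\mathbf1$. *)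

theory Defs
  imports Complex_Main "HOL-Library.Multiset"
begin

text \<open>Points of R^d are represented as functions nat => real; coordinate i of the
paper (1 <= i <= d) is index i-1 < d.  Points of the grid have all coordinates
>= d equal to 0 (canonical representation).\<close>

type_synonym point = "nat \<Rightarrow> real"

definition grid :: "nat \<Rightarrow> real \<Rightarrow> point set" where
  "grid d eps = {x. (\<forall>j<d. 0 \<le> x j \<and> x j \<le> 1 \<and> (\<exists>m::nat. x j = real m * eps))
                   \<and> (\<forall>j\<ge>d. x j = 0)}"

definition shift :: "nat \<Rightarrow> real \<Rightarrow> point \<Rightarrow> point" where
  "shift d e x = (\<lambda>j. if j < d then x j + e else x j)"

definition dist2 :: "nat \<Rightarrow> point \<Rightarrow> point \<Rightarrow> real" where
  "dist2 d x y = sqrt (\<Sum>j<d. (x j - y j)^2)"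

text \<open>The data multiset X (centers indexed by 0..k-1).\<close>
definition data :: "nat \<Rightarrow> nat \<Rightarrow> real \<Rightarrow> (nat \<Rightarrow> point) \<Rightarrow> point multiset" where
  "data k d eps c = (\<Sum>i\<in>{..<k}. replicate_mset (k^2 * nat \<lceil>(ln (real k))^3\<rceil>) (c i)
        + {# shift d eps (c i), shift d (-eps) (c i) #})"

type_synonym path = "(nat \<times> real \<times> int) list"

definition valid_path :: "nat \<Rightarrow> path \<Rightarrow> bool" where
  "valid_path d p = (\<forall>(i,\<xi>,l)\<in>set p. i < d \<and> (l = -1 \<or> l = 1))"

definition ucell :: "path \<Rightarrow> point set" where
  "ucell p = {y. \<forall>(i,\<xi>,l)\<in>set p. (l = -1 \<longrightarrow> y i \<le> \<xi>) \<and> (l = 1 \<longrightarrow> y i > \<xi>)}"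

definition damaged_in :: "nat \<Rightarrow> real \<Rightarrow> point set \<Rightarrow> point \<Rightarrow> bool" where
  "damaged_in d eps u x = (x \<in> u \<and> (shift d eps x \<notin> u \<or> shift d (-eps) x \<notin> u))"

definition Fset :: "nat \<Rightarrow> nat \<Rightarrow> real \<Rightarrow> (nat \<Rightarrow> point) \<Rightarrow> point set \<Rightarrow> nat set" where
  "Fset k d eps c u = {i. i < k \<and> c i \<in> u \<and> \<not> damaged_in d eps u (c i)}"

definition separates :: "nat \<Rightarrow> real \<Rightarrow> point \<Rightarrow> point \<Rightarrow> bool" where
  "separates i \<xi> x y = ((x i \<le> \<xi>) \<noteq> (y i \<le> \<xi>))"

definition cut_damages :: "nat \<Rightarrow> real \<Rightarrow> nat \<Rightarrow> real \<Rightarrow> point \<Rightarrow> bool" where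
  "cut_damages d eps i \<xi> x = (separates i \<xi> x (shift d eps x) \<or> separates i \<xi> x (shift d (-eps) x))"

text \<open>Threshold trees: Node i xi l r splits a cell into y_i <= xi (left) and y_i > xi (right).\<close>
datatype ttree = Leaf | Node nat real ttree ttree

fun wf_tree :: "nat \<Rightarrow> ttree \<Rightarrow> bool" where
  "wf_tree d Leaf = True"
| "wf_tree d (Node i \<xi> l r) = (i < d \<and> wf_tree d l \<and> wf_tree d r)"

fun leaf_paths :: "ttree \<Rightarrow> path set" where
  "leaf_paths Leaf = {[]}"
| "leaf_paths (Node i \<xi> l r) = (\<lambda>p. (i,\<xi>,-1) # p) ` leaf_paths l \<union> (\<lambda>p. (i,\<xi>,1) # p) ` leaf_paths r"

definition leaf_cells :: "ttree \<Rightarrow> point set set" where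
  "leaf_cells t = ucell ` leaf_paths t"

definition tree_damaged :: "nat \<Rightarrow> real \<Rightarrow> ttree \<Rightarrow> point \<Rightarrow> bool" where
  "tree_damaged d eps t x = (\<exists>L\<in>leaf_cells t. x \<in> L \<and> (shift d eps x \<notin> L \<or> shift d (-eps) x \<notin> L))"

end

theory Submission
  imports Defs
begin


lemma ucell_Nil[simp]: "ucell [] = UNIV" by (simp add: ucell_def)

lemma ucell_Cons: "ucell ((i,\<xi>,l)#q) = {y. (l = -1 \<longrightarrow> y i \<le> \<xi>) \<and> (l = 1 \<longrightarrow> y i > \<xi>)} \<inter> ucell q"
  by (auto simp: ucell_def)

lemma ucell_append: "ucell (p @ q) = ucell p \<inter> ucell q"
  unfolding ucell_def set_append ball_Un by blast

lemma valid_path_snoc: "valid_path d p \<Longrightarrow> i < d \<Longrightarrow> (l = -1 \<or> l = 1) \<Longrightarrow> valid_path d (p @ [(i,\<xi>,l)])"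
  by (auto simp: valid_path_def)

lemma Fset_eq: "Fset k d e c u = {j. j < k \<and> c j \<in> u \<and> shift d e (c j) \<in> u \<and> shift d (-e) (c j) \<in> u}"
  by (auto simp: Fset_def damaged_in_def)

lemma Fset_sub: "Fset k d e c u \<subseteq> {..<k}" by (auto simp: Fset_eq)
lemma Fset_fin[simp]: "finite (Fset k d e c u)" by (rule finite_subset[OF Fset_sub]) simp

lemma Fset_Int: "\<forall>i<k. c i \<in> X \<and> shift d e (c i) \<in> X \<and> shift d (-e) (c i) \<in> X \<Longrightarrow>
   Fset k d e c (X \<inter> u) = Fset k d e c u"
  by (auto simp: Fset_eq)

lemma cover: "\<exists>q\<in>leaf_paths t. y \<in> ucell q"
proof (induction t)
  case Leaf then show ?case by simp
next
  case (Node i \<xi> l r)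
  then obtain ql qr where "ql \<in> leaf_paths l" "y \<in> ucell ql" "qr \<in> leaf_paths r" "y \<in> ucell qr" by blast
  show ?case
  proof (cases "y i \<le> \<xi>")
    case True
    then have "y \<in> ucell ((i,\<xi>,-1)#ql)" using \<open>y \<in> ucell ql\<close> by (simp add: ucell_Cons)
    then show ?thesis using \<open>ql \<in> leaf_paths l\<close> by auto
  next
    case False
    then have "y \<in> ucell ((i,\<xi>,1)#qr)" using \<open>y \<in> ucell qr\<close> by (simp add: ucell_Cons)
    then show ?thesis using \<open>qr \<in> leaf_paths r\<close> by auto
  qed
qed

definition dmg :: "nat \<Rightarrow> real \<Rightarrow> (nat \<Rightarrow> point) \<Rightarrow> ttree \<Rightarrow> point set \<Rightarrow> nat \<Rightarrow> bool" where
  "dmg d e c t A j = (\<exists>q\<in>leaf_paths t. c j \<in> A \<inter> ucell q \<and>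
      (shift d e (c j) \<notin> A \<inter> ucell q \<or> shift d (-e) (c j) \<notin> A \<inter> ucell q))"

definition Dset :: "nat \<Rightarrow> nat \<Rightarrow> real \<Rightarrow> (nat \<Rightarrow> point) \<Rightarrow> ttree \<Rightarrow> point set \<Rightarrow> nat set" where
  "Dset k d e c t A = {j \<in> Fset k d e c A. dmg d e c t A j}"

lemma dmg_empty[simp]: "dmg d e c t {} j = False" by (simp add: dmg_def)

lemma Dset_fin[simp]: "finite (Dset k d e c t A)" by (simp add: Dset_def)

lemma dmg_Node: "dmg d e c (Node i \<xi> l r) A j \<longleftrightarrow>
   dmg d e c l (A \<inter> {y. y i \<le> \<xi>}) j \<or> dmg d e c r (A \<inter> {y. \<xi> < y i}) j"
proof -
  have e1: "\<And>q. A \<inter> ucell ((i,\<xi>,-1)#q) = (A \<inter> {y. y i \<le> \<xi>}) \<inter> ucell q" by (auto simp: ucell_Cons)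
  have e2: "\<And>q. A \<inter> ucell ((i,\<xi>,1)#q) = (A \<inter> {y. \<xi> < y i}) \<inter> ucell q" by (auto simp: ucell_Cons)
  have bi: "\<And>f S P. (\<exists>x\<in>f ` S. P x) = (\<exists>x\<in>S. P (f x))" by blast
  show ?thesis unfolding dmg_def leaf_paths.simps bex_Un bi e1 e2 by (rule refl)
qed

lemma arith_step:
  fixes e a n nL nR DL DR D s :: real and r :: nat
  assumes "e \<ge> 0" "s \<ge> 0" "D \<ge> a + DL + DR" "a \<ge> e*n/2" "nL + nR = n - a" "a \<ge> 0" "DL \<ge> 0" "DR \<ge> 0"
    "DL \<ge> e/2*(r*nL - r*DL - (2^r - 1)*s)" "DR \<ge> e/2*(r*nR - r*DR - (2^r - 1)*s)"
  shows "D \<ge> e/2*(real (Suc r)*n - real (Suc r)*D - (2^(Suc r) - 1)*s)"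
proof -
  have "e/2*(real (Suc r)*n - real (Suc r)*D - (2^(Suc r) - 1)*s)
     \<le> e/2*(real (Suc r)*n - real (Suc r)*(a+DL+DR) - (2^(Suc r) - 1)*s)"
    using assms by (intro mult_left_mono) (auto intro: mult_left_mono)
  also have "\<dots> = e/2*n - e/2*(a+DL+DR+s) + e/2*(r*nL - r*DL - (2^r - 1)*s) + e/2*(r*nR - r*DR - (2^r - 1)*s)"
  proof -
    have n: "n = nL + nR + a" using assms(5) by linarith
    show ?thesis unfolding n by (simp add: field_simps)
  qed
  also have "\<dots> \<le> e/2*n + DL + DR" using assms by (smt (verit) divide_nonneg_pos mult_nonneg_nonneg)
  also have "\<dots> \<le> D" using assms by linarith
  finally show ?thesis .
qed

lemma suc_le_pow: "real (Suc r) \<le> 2^r"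
proof (induction r)
  case 0 then show ?case by simp
next
  case (Suc r) then show ?case by simp
qed

lemma arith_small:
  fixes e n D s :: real and r :: nat
  assumes "e \<ge> 0" "D \<ge> 0" "0 \<le> n" "n \<le> s"
  shows "D \<ge> e/2*(r*n - r*D - (2^r - 1)*s)"
proof -
  have "r*n \<le> r*s" using assms by (simp add: mult_left_mono)
  also have "\<dots> \<le> (2^r - 1)*s" using suc_le_pow[of r] assms by (intro mult_right_mono) auto
  moreover have "r*D \<ge> 0" using assms by simp
  ultimately have "r*n - r*D - (2^r - 1)*s \<le> 0" by linarith
  then have "e/2*(r*n - r*D - (2^r - 1)*s) \<le> 0" using assms by (simp add: mult_nonneg_nonpos)
  then show ?thesis using assms by linarith
qed

lemma prop_U: "((P \<and> a \<and> b \<and> c) \<or> (P \<and> \<not>a \<and> \<not>b \<and> \<not>c)) = (P \<and> \<not>((a \<noteq> b) \<or> (a \<noteq> c)))"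
  by blast

lemma U: "Fset k d e c (A \<inter> {y. y i \<le> \<xi>}) \<union> Fset k d e c (A \<inter> {y. \<xi> < y i}) = Fset k d e c A - {j\<in>Fset k d e c A. cut_damages d e i \<xi> (c j)}"
proof (rule set_eqI)
  fix j
  have L: "j \<in> Fset k d e c (A \<inter> {y. y i \<le> \<xi>}) \<longleftrightarrow> j \<in> Fset k d e c A \<and> (c j i \<le> \<xi> \<and> shift d e (c j) i \<le> \<xi> \<and> shift d (-e) (c j) i \<le> \<xi>)"
    unfolding Fset_eq by blast
  have R: "j \<in> Fset k d e c (A \<inter> {y. \<xi> < y i}) \<longleftrightarrow> j \<in> Fset k d e c A \<and> (\<not> c j i \<le> \<xi> \<and> \<not> shift d e (c j) i \<le> \<xi> \<and> \<not> shift d (-e) (c j) i \<le> \<xi>)"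
    unfolding Fset_eq not_le by blast
  have M: "j \<in> Fset k d e c A - {j\<in>Fset k d e c A. cut_damages d e i \<xi> (c j)} \<longleftrightarrow> j \<in> Fset k d e c A \<and>
     \<not> (((c j i \<le> \<xi>) \<noteq> (shift d e (c j) i \<le> \<xi>)) \<or> ((c j i \<le> \<xi>) \<noteq> (shift d (-e) (c j) i \<le> \<xi>)))"
    unfolding cut_damages_def separates_def by blast
  show "j \<in> Fset k d e c (A \<inter> {y. y i \<le> \<xi>}) \<union> Fset k d e c (A \<inter> {y. \<xi> < y i}) \<longleftrightarrow>
     j \<in> Fset k d e c A - {j\<in>Fset k d e c A. cut_damages d e i \<xi> (c j)}"
    unfolding Un_iff L R M by (rule prop_U)
qed

lemma SL: assumes q: "q \<in> leaf_paths l" "c j \<in> ucell q" and T: "c j i \<le> \<xi>" and cA: "c j \<in> A" and cd: "cut_damages d e i \<xi> (c j)"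
  shows "dmg d e c l (A \<inter> {y. y i \<le> \<xi>}) j"
proof -
  define AA where "AA = A \<inter> {y. y i \<le> \<xi>}"
  from cd T have "\<not> shift d e (c j) i \<le> \<xi> \<or> \<not> shift d (-e) (c j) i \<le> \<xi>"
    unfolding cut_damages_def separates_def by simp
  then have "shift d e (c j) \<notin> A \<inter> {y. y i \<le> \<xi>} \<inter> ucell q \<or> shift d (-e) (c j) \<notin> A \<inter> {y. y i \<le> \<xi>} \<inter> ucell q"
    by auto
  moreover have "c j \<in> A \<inter> {y. y i \<le> \<xi>} \<inter> ucell q" using q cA T by simp
  ultimately have "c j \<in> AA \<inter> ucell q \<and> (shift d e (c j) \<notin> AA \<inter> ucell q \<or> shift d (-e) (c j) \<notin> AA \<inter> ucell q)"
    unfolding AA_def Int_assoc by (rule conjI[rotated])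
  then show ?thesis unfolding dmg_def AA_def using q(1) by (rule bexI)
qed

lemma SR: assumes q: "q \<in> leaf_paths l" "c j \<in> ucell q" and T: "\<not> c j i \<le> \<xi>" and cA: "c j \<in> A" and cd: "cut_damages d e i \<xi> (c j)"
  shows "dmg d e c l (A \<inter> {y. \<xi> < y i}) j"
proof -
  define AA where "AA = A \<inter> {y. \<xi> < y i}"
  from cd T have "shift d e (c j) i \<le> \<xi> \<or> shift d (-e) (c j) i \<le> \<xi>"
    unfolding cut_damages_def separates_def by simp
  then have "shift d e (c j) \<notin> A \<inter> {y. \<xi> < y i} \<inter> ucell q \<or> shift d (-e) (c j) \<notin> A \<inter> {y. \<xi> < y i} \<inter> ucell q"
    by auto
  moreover have "c j \<in> A \<inter> {y. \<xi> < y i} \<inter> ucell q" using q cA T by (simp add: not_le)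
  ultimately have "c j \<in> AA \<inter> ucell q \<and> (shift d e (c j) \<notin> AA \<inter> ucell q \<or> shift d (-e) (c j) \<notin> AA \<inter> ucell q)"
    unfolding AA_def Int_assoc by (rule conjI[rotated])
  then show ?thesis unfolding dmg_def AA_def using q(1) by (rule bexI)
qed



lemma main:
  fixes k d :: nat and e B s :: real and c :: "nat \<Rightarrow> point" and X :: "point set"
  assumes e0: "0 \<le> e" and s1: "1 \<le> s"
  and P: "\<forall>i<k. c i \<in> X \<and> shift d e (c i) \<in> X \<and> shift d (-e) (c i) \<in> X"
  and HP: "\<forall>p. valid_path d p \<and> real (length p) \<le> B \<longrightarrow>
         real (card (Fset k d e c (ucell p))) \<le> s
       \<or> (\<forall>i \<xi>. i < d \<and> (\<exists>x\<in>X \<inter> ucell p. \<exists>y\<in>X \<inter> ucell p. separates i \<xi> x y)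
           \<longrightarrow> real (card {j\<in>Fset k d e c (ucell p). cut_damages d e i \<xi> (c j)})
                 \<ge> e * real (card (Fset k d e c (ucell p))) / 2)"
  shows "wf_tree d t \<Longrightarrow> (\<forall>q\<in>leaf_paths t. card {i. i<k \<and> c i \<in> A \<inter> ucell q} \<le> 1) \<Longrightarrow>
    A = X \<inter> ucell p \<Longrightarrow> valid_path d p \<Longrightarrow> real (length p + r) \<le> B \<Longrightarrow>
    real (card (Dset k d e c t A)) \<ge> e/2 * (real r * real (card (Fset k d e c A))
        - real r * real (card (Dset k d e c t A)) - (2^r - 1) * s)"
proof (induction t arbitrary: A p r)
  case Leaf
  have fin: "finite {i. i<k \<and> c i \<in> A \<inter> ucell []}" by simp
  have "Fset k d e c A \<subseteq> {i. i<k \<and> c i \<in> A \<inter> ucell []}" by (auto simp: Fset_eq)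
  moreover have "card {i. i<k \<and> c i \<in> A \<inter> ucell []} \<le> 1" using Leaf.prems(2) by simp
  ultimately have "card (Fset k d e c A) \<le> 1" using card_mono[OF fin] le_trans by blast
  then show ?case using arith_small[of e "real (card (Dset k d e c Leaf A))" "real (card (Fset k d e c A))" s r] e0 s1
    by simp
next
  case (Node i \<xi> l rt)
  define F where "F = Fset k d e c A"
  define D where "D = Dset k d e c (Node i \<xi> l rt) A"
  define AL where "AL = A \<inter> {y. y i \<le> \<xi>}"
  define AR where "AR = A \<inter> {y. \<xi> < y i}"
  have id: "i < d" and wfl: "wf_tree d l" and wfr: "wf_tree d rt" using Node.prems(1) by auto
  have leafL: "\<forall>q\<in>leaf_paths l. card {j. j<k \<and> c j \<in> AL \<inter> ucell q} \<le> 1"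
  proof
    fix q assume "q \<in> leaf_paths l"
    then have "(i,\<xi>,-1)#q \<in> leaf_paths (Node i \<xi> l rt)" by simp
    moreover have "AL \<inter> ucell q = A \<inter> ucell ((i,\<xi>,-1)#q)" by (auto simp: AL_def ucell_Cons)
    ultimately show "card {j. j<k \<and> c j \<in> AL \<inter> ucell q} \<le> 1" using Node.prems(2) by simp
  qed
  have leafR: "\<forall>q\<in>leaf_paths rt. card {j. j<k \<and> c j \<in> AR \<inter> ucell q} \<le> 1"
  proof
    fix q assume "q \<in> leaf_paths rt"
    then have "(i,\<xi>,1)#q \<in> leaf_paths (Node i \<xi> l rt)" by simp
    moreover have "AR \<inter> ucell q = A \<inter> ucell ((i,\<xi>,1)#q)" by (auto simp: AR_def ucell_Cons)
    ultimately show "card {j. j<k \<and> c j \<in> AR \<inter> ucell q} \<le> 1" using Node.prems(2) by simp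
  qed
  show ?case
  proof (cases "real (card F) \<le> s")
    case True
    then show ?thesis using arith_small[of e "real (card D)" "real (card F)" s r] e0
      unfolding F_def D_def by simp
  next
    case big: False
    show ?thesis
    proof (cases "\<exists>x\<in>A. \<exists>y\<in>A. separates i \<xi> x y")
      case False
      then have "(\<forall>x\<in>A. x i \<le> \<xi>) \<or> (\<forall>x\<in>A. \<not> x i \<le> \<xi>)" unfolding separates_def by blast
      then show ?thesis
      proof
        assume all: "\<forall>x\<in>A. x i \<le> \<xi>"
        then have AL: "AL = A" and AR: "AR = {}" by (auto simp: AL_def AR_def)
        have "D = Dset k d e c l A"
          using AL AR unfolding D_def Dset_def dmg_Node AL_def AR_def by simp
        moreover have "real (card (Dset k d e c l A)) \<ge> e/2 * (real r * real (card (Fset k d e c A))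
            - real r * real (card (Dset k d e c l A)) - (2^r - 1) * s)"
          using Node.IH(1)[OF wfl _ Node.prems(3) Node.prems(4) Node.prems(5)] leafL AL by simp
        ultimately show ?thesis unfolding D_def by simp
      next
        assume all: "\<forall>x\<in>A. \<not> x i \<le> \<xi>"
        then have AL: "AL = {}" and AR: "AR = A" by (auto simp: AL_def AR_def)
        have "D = Dset k d e c rt A"
          using AL AR unfolding D_def Dset_def dmg_Node AL_def AR_def by simp
        moreover have "real (card (Dset k d e c rt A)) \<ge> e/2 * (real r * real (card (Fset k d e c A))
            - real r * real (card (Dset k d e c rt A)) - (2^r - 1) * s)"
          using Node.IH(2)[OF wfr _ Node.prems(3) Node.prems(4) Node.prems(5)] leafR AR by simp
        ultimately show ?thesis unfolding D_def by simp
      qed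
    next
      case sep: True
      show ?thesis
      proof (cases r)
        case 0 then show ?thesis by simp
      next
        case (Suc r')
        have lp: "real (length p) \<le> B" using Node.prems(5) by simp
        have FA0: "Fset k d e c (X \<inter> ucell p) = Fset k d e c (ucell p)" by (rule Fset_Int[OF P])
        have FA: "Fset k d e c (ucell p) = F" unfolding F_def Node.prems(3) FA0 ..
        define Dm where "Dm = {j\<in>F. cut_damages d e i \<xi> (c j)}"
        note hp0 = HP[rule_format, OF conjI[OF Node.prems(4) lp]]
        note hp = hp0[unfolded FA Node.prems(3)[symmetric]]
        have a: "real (card Dm) \<ge> e * real (card F) / 2" using hp big sep id unfolding Dm_def by simp
        define FL where "FL = Fset k d e c AL"
        define FR where "FR = Fset k d e c AR"
        define DL where "DL = Dset k d e c l AL"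
        define DR where "DR = Dset k d e c rt AR"
        have U: "FL \<union> FR = F - Dm"
          unfolding FL_def FR_def F_def Dm_def AL_def AR_def by (rule U)
        have dj: "FL \<inter> FR = {}" unfolding FL_def FR_def AL_def AR_def Fset_eq by auto
        have DmF: "Dm \<subseteq> F" unfolding Dm_def by auto
        have DLs: "DL \<subseteq> FL" and DRs: "DR \<subseteq> FR" unfolding DL_def DR_def FL_def FR_def Dset_def by auto
        have FLF: "FL \<subseteq> F" and FRF: "FR \<subseteq> F" using U by auto
        have sub1: "DL \<subseteq> D"
        proof
          fix j assume "j \<in> DL"
          then have "j \<in> FL" "dmg d e c l AL j" using DLs unfolding DL_def Dset_def by auto
          then show "j \<in> D" using FLF unfolding D_def Dset_def AL_def dmg_Node F_def by blast
        qed
        have sub2: "DR \<subseteq> D"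
        proof
          fix j assume "j \<in> DR"
          then have "j \<in> FR" "dmg d e c rt AR j" using DRs unfolding DR_def Dset_def by auto
          then show "j \<in> D" using FRF unfolding D_def Dset_def AR_def dmg_Node F_def by blast
        qed
        have sub3: "Dm \<subseteq> D"
        proof
          fix j assume j: "j \<in> Dm"
          then have jF: "j \<in> F" and cd: "cut_damages d e i \<xi> (c j)" unfolding Dm_def by auto
          then have cA: "c j \<in> A" unfolding F_def Fset_eq by auto
          have "dmg d e c (Node i \<xi> l rt) A j"
          proof (cases "c j i \<le> \<xi>")
            case True
            obtain q where q: "q \<in> leaf_paths l" "c j \<in> ucell q" using cover by blast
            show ?thesis unfolding dmg_Node using SL[where c=c and j=j and i=i and l=l, OF q True cA cd] by blast
          next
            case False
            obtain q where q: "q \<in> leaf_paths rt" "c j \<in> ucell q" using cover by blast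
            show ?thesis unfolding dmg_Node using SR[where c=c and j=j and i=i and l=rt, OF q False cA cd] by blast
          qed
          then show "j \<in> D" using jF unfolding D_def Dset_def F_def by blast
        qed
        have finF: "finite F" "finite FL" "finite FR" "finite Dm" "finite DL" "finite DR" "finite D"
          unfolding F_def FL_def FR_def DL_def DR_def D_def using finite_subset[OF DmF] by (simp_all add: F_def)
        have cn: "card FL + card FR = card F - card Dm"
          using card_Un_disjoint[OF finF(2,3) dj] card_Diff_subset[OF finF(4) DmF] U by simp
        have cmF: "card Dm \<le> card F" using card_mono[OF finF(1) DmF] .
        have cn': "real (card FL) + real (card FR) = real (card F) - real (card Dm)"
          using cn cmF by (metis of_nat_add of_nat_diff)
        have dj2: "Dm \<inter> DL = {}" "Dm \<inter> DR = {}" "DL \<inter> DR = {}" using U DLs DRs dj by auto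
        have "card (Dm \<union> DL \<union> DR) = card Dm + card DL + card DR"
          using dj2 finF by (simp add: card_Un_disjoint Int_Un_distrib2)
        moreover have "card (Dm \<union> DL \<union> DR) \<le> card D" using sub1 sub2 sub3 finF by (intro card_mono) auto
        ultimately have cD: "real (card D) \<ge> real (card Dm) + real (card DL) + real (card DR)" by linarith
        have IHL: "real (card DL) \<ge> e/2 * (real r' * real (card FL) - real r' * real (card DL) - (2^r' - 1) * s)"
          unfolding DL_def FL_def
          using Node.IH(1)[OF wfl leafL, of "p @ [(i,\<xi>,-1)]" r'] Node.prems(3,4,5) Suc id
          by (simp add: ucell_append ucell_Cons valid_path_snoc AL_def Int_assoc)
        have IHR: "real (card DR) \<ge> e/2 * (real r' * real (card FR) - real r' * real (card DR) - (2^r' - 1) * s)"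
          unfolding DR_def FR_def
          using Node.IH(2)[OF wfr leafR, of "p @ [(i,\<xi>,1)]" r'] Node.prems(3,4,5) Suc id
          by (simp add: ucell_append ucell_Cons valid_path_snoc AR_def Int_assoc)
        have "real (card D) \<ge> e/2 * (real (Suc r') * real (card F) - real (Suc r') * real (card D) - (2^(Suc r') - 1) * s)"
          by (rule arith_step[OF e0 _ cD a cn' _ _ _ IHL IHR]) (use s1 in auto)
        then show ?thesis unfolding D_def F_def Suc .
      qed
    qed
  qed
qed



lemma final_arith:
  fixes k R :: nat and \<delta> \<epsilon> C D :: real
  assumes d0: "\<delta> > 0" and d1: "\<delta> < 1/100" and C1: "C \<ge> 1" and eps: "\<epsilon> = 50*\<delta>/C" and R2: "R \<ge> 2"
    and Rk: "16^R \<le> k" and CR: "C < 4*R + 5"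
    and M: "D \<ge> \<epsilon>/2 * (real R * real k - real R * D - (2^R - 1) * sqrt (real k))"
  shows "D \<ge> 2*\<delta>*real k"
proof (rule ccontr)
  assume "\<not> ?thesis"
  then have Dlt: "D < 2*\<delta>*real k" by simp
  define K where "K = real k"
  define r where "r = real R"
  have K0: "K \<ge> 0" unfolding K_def by simp
  have "((4::real)^R)^2 = 16^R" by (simp add: power2_eq_square power_mult_distrib[symmetric])
  also have "\<dots> \<le> K" unfolding K_def using Rk by (metis of_nat_le_iff of_nat_numeral of_nat_power)
  finally have q1: "(4::real)^R \<le> sqrt K" by (rule real_le_rsqrt)
  have sK: "sqrt K * sqrt K = K" using K0 by simp
  have "(2::real)^R * sqrt K * 2^R = 4^R * sqrt K" by (simp add: power_mult_distrib[symmetric])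
  also have "\<dots> \<le> sqrt K * sqrt K" using q1 K0 by (intro mult_right_mono) auto
  finally have q2: "(2::real)^R * sqrt K * 2^R \<le> K" using sK by simp
  have p4: "(4::real) \<le> 2^R" using R2 by (metis numeral_le_iff power2_eq_square power_increasing
        numeral_times_numeral semiring_norm(12) one_le_numeral of_nat_numeral numeral_Bit0 mult_2 power_numeral_even) 
  have "(2::real)^R * sqrt K * 4 \<le> 2^R * sqrt K * 2^R" using p4 K0 by (intro mult_left_mono) auto
  with q2 have q3: "(2::real)^R * sqrt K \<le> K/4" by linarith
  have q4: "(2^R - 1) * sqrt K \<le> 2^R * sqrt K" using K0 by (simp add: algebra_simps)
  have "r * D \<le> r * (2*\<delta>*K)" unfolding r_def K_def using Dlt by (intro mult_left_mono) auto
  also have "\<dots> \<le> r * (2*(1/100)*K)"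
  proof -
    have "\<delta>*K \<le> (1/100)*K" using d1 K0 by (intro mult_right_mono) auto
    then show ?thesis unfolding r_def by (intro mult_left_mono) auto
  qed
  finally have q5: "r * D \<le> r * K / 50" by simp
  have X: "r*K - r*D - (2^R - 1)*sqrt K \<ge> K * (49/50*r - 1/4)"
  proof -
    have "K * (49/50*r - 1/4) = r*K - r*K/50 - K/4" by (simp add: algebra_simps)
    then show ?thesis using q3 q4 q5 by linarith
  qed
  have "2*C/25 \<le> 49/50*r - 1/4" using CR R2 unfolding r_def by simp
  then have "K * (2*C/25) \<le> K * (49/50*r - 1/4)" using K0 by (intro mult_left_mono)
  with X have "K * (2*C/25) \<le> r*K - r*D - (2^R - 1)*sqrt K" by linarith
  moreover have "\<epsilon>/2 \<ge> 0" using eps d0 C1 by simp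
  ultimately have "\<epsilon>/2 * (K * (2*C/25)) \<le> \<epsilon>/2 * (r*K - r*D - (2^R - 1)*sqrt K)" by (intro mult_left_mono)
  also have "\<epsilon>/2 * (K * (2*C/25)) = 2*\<delta>*K" unfolding eps using C1 by (simp add: field_simps)
  finally have "2*\<delta>*K \<le> D" using M unfolding r_def K_def by linarith
  then show False using Dlt unfolding K_def by simp
qed

theorem lemma10:
  fixes k d :: nat and \<delta> \<epsilon> :: real and c :: "nat \<Rightarrow> point"
  assumes hk: "k > 500"
    and hdelta1: "(ln (real k))^3 / sqrt (real k) < \<delta>" and hdelta2: "\<delta> < 1/100"
    and hd: "d = 300 * nat \<lceil>ln (real k)\<rceil>"
    and heps: "\<epsilon> = 50 * \<delta> / real_of_int \<lceil>ln (real k)\<rceil>"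
    and hgrid: "\<forall>i<k. c i \<in> grid d \<epsilon>"
    and hsep: "\<forall>i<k. \<forall>j<k. i \<noteq> j \<longrightarrow> dist2 d (c i) (c j) \<ge> sqrt (real d) / 5"
    and hpath: "\<forall>p. valid_path d p \<and> real (length p) \<le> log 2 (real k) / 4 \<longrightarrow>
         real (card (Fset k d \<epsilon> c (ucell p))) \<le> sqrt (real k)
       \<or> (\<forall>i \<xi>. i < d \<and>
             (\<exists>x\<in>set_mset (data k d \<epsilon> c) \<inter> ucell p. \<exists>y\<in>set_mset (data k d \<epsilon> c) \<inter> ucell p.
                 separates i \<xi> x y)
           \<longrightarrow> real (card {j\<in>Fset k d \<epsilon> c (ucell p). cut_damages d \<epsilon> i \<xi> (c j)})
                 \<ge> \<epsilon> * real (card (Fset k d \<epsilon> c (ucell p))) / 2)"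
  shows "\<forall>t. wf_tree d t \<and> (\<forall>L\<in>leaf_cells t. card {i. i < k \<and> c i \<in> L} \<le> 1) \<longrightarrow>
           real (card {i. i < k \<and> tree_damaged d \<epsilon> t (c i)}) \<ge> 2 * \<delta> * real k"
proof (intro allI impI)
  fix t assume ht: "wf_tree d t \<and> (\<forall>L\<in>leaf_cells t. card {i. i < k \<and> c i \<in> L} \<le> 1)"
  define X where "X = set_mset (data k d \<epsilon> c)"
  define C where "C = real_of_int \<lceil>ln (real k)\<rceil>"
  have k1: "real k > 1" using hk by simp
  have lnpos: "ln (real k) > 0" using k1 by simp
  have sk: "sqrt (real k) > 0" using hk by simp
  have "(ln (real k))^3 / sqrt (real k) > 0" using lnpos sk by simp
  then have d0: "\<delta> > 0" using hdelta1 by linarith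
  have "\<lceil>ln (real k)\<rceil> > 0" using lnpos by simp
  then have C1: "C \<ge> 1" unfolding C_def by linarith
  have eps: "\<epsilon> = 50*\<delta>/C" unfolding C_def heps ..
  have e0: "0 \<le> \<epsilon>" using eps d0 C1 by simp
  have "(ln (real k))^3 > 0" using lnpos by simp
  then have "\<lceil>(ln (real k))^3\<rceil> > 0" by simp
  then have N: "k^2 * nat \<lceil>(ln (real k))^3\<rceil> \<noteq> 0" using hk by simp
  have P: "\<forall>i<k. c i \<in> X \<and> shift d \<epsilon> (c i) \<in> X \<and> shift d (-\<epsilon>) (c i) \<in> X"
  proof (intro allI impI)
    fix i assume "i < k"
    have "X = (\<Union>j\<in>{..<k}. set_mset (replicate_mset (k^2 * nat \<lceil>(ln (real k))^3\<rceil>) (c j)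
        + {# shift d \<epsilon> (c j), shift d (-\<epsilon>) (c j) #}))"
      unfolding X_def data_def by (rule set_mset_sum) simp
    also have "\<dots> = (\<Union>j\<in>{..<k}. {shift d \<epsilon> (c j), shift d (-\<epsilon>) (c j), c j})"
      using N by simp
    finally show "c i \<in> X \<and> shift d \<epsilon> (c i) \<in> X \<and> shift d (-\<epsilon>) (c i) \<in> X" using \<open>i < k\<close> by blast
  qed
  obtain R where R: "16^R \<le> k" "k < 16^(R+1)" using ex_power_ivl1[of 16 k] hk by auto
  have R2: "R \<ge> 2"
  proof (rule ccontr)
    assume "\<not> R \<ge> 2"
    then have "R + 1 \<le> 2" by simp
    then have "(16::nat)^(R+1) \<le> 16^2" by (rule power_increasing) simp
    then show False using R(2) hk by simp
  qed
  have "(2::real)^(4*R) = real (16^R)" by (simp add: power_mult)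
  then have "(2::real)^(4*R) \<le> real k" using R(1) by (metis of_nat_le_iff)
  then have "real (4*R) \<le> log 2 (real k)" by (rule le_log_of_power) simp
  then have RB: "real (length ([]::path) + R) \<le> log 2 (real k) / 4" by simp
  have lnR: "ln (real k) < 4 * real R + 4"
  proof -
    have kl: "real k < real (16^(R+1))" using R(2) by (simp only: of_nat_less_iff)
    have "ln (real k) < ln (real (16^(R+1)))" using kl k1 by (subst ln_less_cancel_iff) (linarith, linarith, rule kl)
    also have "\<dots> = real (R+1) * ln 16" by (simp only: of_nat_power of_nat_numeral ln_realpow)
    also have "ln (16::real) = 4 * ln 2"
      using ln_realpow[of 2 4] by simp
    finally have "ln (real k) < real (R+1) * (4 * ln 2)" .
    moreover have "real (R+1) * (4 * ln 2) \<le> real (R+1) * 4" using ln_2_less_1 by (intro mult_left_mono) auto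
    ultimately show ?thesis by simp
  qed
  have CR: "C < 4*R + 5" using ceiling_correct[of "ln (real k)"] lnR unfolding C_def by simp
  have s1: "1 \<le> sqrt (real k)" using k1 by simp
  have Fk: "Fset k d \<epsilon> c X = {..<k}" using P by (auto simp: Fset_eq)
  have leaf: "\<forall>q\<in>leaf_paths t. card {i. i<k \<and> c i \<in> X \<inter> ucell q} \<le> 1"
  proof
    fix q assume q: "q \<in> leaf_paths t"
    then have "ucell q \<in> leaf_cells t" unfolding leaf_cells_def by simp
    then have "card {i. i < k \<and> c i \<in> ucell q} \<le> 1" using ht by blast
    moreover have "{i. i<k \<and> c i \<in> X \<inter> ucell q} = {i. i < k \<and> c i \<in> ucell q}" using P by auto
    ultimately show "card {i. i<k \<and> c i \<in> X \<inter> ucell q} \<le> 1" by simp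
  qed
  have M: "real (card (Dset k d \<epsilon> c t X)) \<ge> \<epsilon>/2 * (real R * real (card (Fset k d \<epsilon> c X))
        - real R * real (card (Dset k d \<epsilon> c t X)) - (2^R - 1) * sqrt (real k))"
    by (rule main[OF e0 s1 P hpath[folded X_def] conjunct1[OF ht] leaf _ _ RB]) (simp_all add: valid_path_def)
  have sub: "Dset k d \<epsilon> c t X \<subseteq> {i. i < k \<and> tree_damaged d \<epsilon> t (c i)}"
  proof
    fix j assume j: "j \<in> Dset k d \<epsilon> c t X"
    then have jk: "j < k" and dm: "dmg d \<epsilon> c t X j" unfolding Dset_def Fk by auto
    from dm obtain q where q: "q \<in> leaf_paths t" "c j \<in> X \<inter> ucell q"
      "shift d \<epsilon> (c j) \<notin> X \<inter> ucell q \<or> shift d (-\<epsilon>) (c j) \<notin> X \<inter> ucell q"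
      unfolding dmg_def by blast
    have "shift d \<epsilon> (c j) \<notin> ucell q \<or> shift d (-\<epsilon>) (c j) \<notin> ucell q" using q(3) P jk by blast
    moreover have "ucell q \<in> leaf_cells t" using q(1) unfolding leaf_cells_def by simp
    ultimately have "tree_damaged d \<epsilon> t (c j)" unfolding tree_damaged_def using q(2) by blast
    then show "j \<in> {i. i < k \<and> tree_damaged d \<epsilon> t (c i)}" using jk by simp
  qed
  have fin: "finite {i. i < k \<and> tree_damaged d \<epsilon> t (c i)}" by simp
  have le: "real (card (Dset k d \<epsilon> c t X)) \<le> real (card {i. i < k \<and> tree_damaged d \<epsilon> t (c i)})"
    using card_mono[OF fin sub] by simp
  have "real (card (Dset k d \<epsilon> c t X)) \<ge> 2*\<delta>*real k"
    by (rule final_arith[OF d0 hdelta2 C1 eps R2 R(1) CR]) (use M Fk in simp)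
  then show "real (card {i. i < k \<and> tree_damaged d \<epsilon> t (c i)}) \<ge> 2 * \<delta> * real k" using le by linarith
qed

end
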